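(* Let $X\in\mathbb{R}^{n\times m}$ with $m>n$ be a full rank matrix. There exists a subset $\mathcal S\subset[m]$ of cardinality $m-1$ such that $X_{\mathcal S}$ is full rank and $$\|X_{\mathcal S}^{\dagger}\|_F^2 \le \frac{m-n+1}{m-n}\,\|X^{\dagger}\|_F^2 .$$
   Context: $[m]=\{1,\dots,m\}$; $X_{\mathcal S}$ is the submatrix of $X$ formed by the columns indexed by $\mathcal S$; $A^{\dagger}$ is the Moore–Penrose pseudo-inverse and $\|\cdot\|_F$ the Frobenius norm. *)

theory Defs
  imports "Jordan_Normal_Form.DL_Rank" "Jordan_Normal_Form.DL_Submatrix"
begin

definition mp_pinv :: "real mat \<Rightarrow> real mat" where
  "mp_pinv A = (THE B. B \<in> carrier_mat (dim_col A) (dim_row A) \<and>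
      A * B * A = A \<and> B * A * B = B \<and>
      transpose_mat (A * B) = A * B \<and> transpose_mat (B * A) = B * A)"

definition frob_norm :: "real mat \<Rightarrow> real" where
  "frob_norm A = sqrt (\<Sum>i<dim_row A. \<Sum>j<dim_col A. (A $$ (i, j))\<^sup>2)"

end

theory Submission
  imports Defs
begin


lemma rank_full_surj:
  fixes X :: "real mat"
  assumes X: "X \<in> carrier_mat n m" and r: "vec_space.rank n X = n"
    and y: "y \<in> carrier_vec n"
  shows "\<exists>x\<in>carrier_vec m. X *\<^sub>v x = y"
proof -
  interpret vec_space "TYPE(real)" n .
  have lin_indpt_empty': "lin_indpt {}"
    by (metis (no_types) empty_subsetI fin_dim finite_basis_exists subset_li_is_li vec_vs vectorspace.basis_def)
  obtain U where U: "finite U" "maximal U (\<lambda>T. T \<subseteq> set (cols X) \<and> lin_indpt T)"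
    using maximal_exists_superset[of "set (cols X)" "(\<lambda>T. T \<subseteq> set (cols X) \<and> lin_indpt T)" "{}"]
    using lin_indpt_empty' by (metis List.finite_set empty_subsetI)
  have cU: "card U = n" using rank_card_indpt[OF X U(2)] r by simp
  have Us: "U \<subseteq> set (cols X)" "lin_indpt U" using U(2) unfolding maximal_def by auto
  have Uc: "U \<subseteq> carrier_vec n" using Us(1) X cols_dim by blast
  have "basis U" by (rule dim_li_is_basis, insert U(1) Uc Us cU dim_is_n, auto)
  hence "span U = carrier_vec n" unfolding basis_def by simp
  moreover have "span U \<subseteq> span (set (cols X))" by (rule span_is_monotone[OF Us(1)])
  ultimately have "y \<in> col_space X" using y unfolding col_space_def by auto
  thus ?thesis using col_space_eq[OF X] X by auto
qed

lemma right_inv_rank: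
  fixes A :: "real mat"
  assumes A: "A \<in> carrier_mat n k" and C: "C \<in> carrier_mat k n" and AC: "A * C = 1\<^sub>m n"
  shows "vec_space.rank n A = n"
proof -
  interpret vec_space "TYPE(real)" n .
  have "col_space A = carrier_vec n"
  proof -
    have "y \<in> col_space A" if y: "y \<in> carrier_vec n" for y
    proof -
      have "A *\<^sub>v (C *\<^sub>v y) = (A * C) *\<^sub>v y" using A C y by (simp add: assoc_mult_mat_vec)
      also have "\<dots> = y" using AC y by simp
      finally have eq: "A *\<^sub>v (C *\<^sub>v y) = y" .
      have Cy: "C *\<^sub>v y \<in> carrier_vec (dim_col A)" using A C y by auto
      show ?thesis unfolding col_space_eq[OF A] using y A Cy eq by blast
    qed
    thus ?thesis using col_space_eq[OF A] A by auto
  qed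
  hence "span (set (cols A)) = carrier V" unfolding col_space_def by simp
  hence "span_vs (set (cols A)) = V" by simp
  thus ?thesis unfolding rank_def using dim_is_n by simp
qed

lemma penrose_unique:
  fixes A B C :: "real mat"
  assumes A: "A \<in> carrier_mat n k" and B: "B \<in> carrier_mat k n" and C: "C \<in> carrier_mat k n"
  and b1: "A*B*A = A" and b2: "B*A*B = B" and b3: "(A*B)\<^sup>T = A*B" and b4: "(B*A)\<^sup>T = B*A"
  and c1: "A*C*A = A" and c2: "C*A*C = C" and c3: "(A*C)\<^sup>T = A*C" and c4: "(C*A)\<^sup>T = C*A"
  shows "B = C"
proof -
  have "A*B = (A*C*A)*B" using c1 by simp
  also have "\<dots> = (A*C)*(A*B)" using A B C by (metis assoc_mult_mat mult_carrier_mat)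
  also have "\<dots> = (A*C)\<^sup>T*(A*B)\<^sup>T" using b3 c3 by simp
  also have "\<dots> = (A*B*(A*C))\<^sup>T" using A B C by (metis transpose_mult mult_carrier_mat)
  also have "A*B*(A*C) = (A*B*A)*C" using A B C by (metis assoc_mult_mat mult_carrier_mat)
  also have "\<dots> = A*C" using b1 by simp
  finally have AB: "A*B = A*C" using c3 by simp
  have "B*A = B*(A*C*A)" using c1 by simp
  also have "\<dots> = (B*A)*(C*A)" using A B C by (metis assoc_mult_mat mult_carrier_mat)
  also have "\<dots> = (B*A)\<^sup>T*(C*A)\<^sup>T" using b4 c4 by simp
  also have "\<dots> = (C*A*(B*A))\<^sup>T" using A B C by (metis transpose_mult mult_carrier_mat)
  also have "C*A*(B*A) = C*(A*B*A)" using A B C by (metis assoc_mult_mat mult_carrier_mat)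
  also have "\<dots> = C*A" using b1 by simp
  finally have BA: "B*A = C*A" using c4 by simp
  have "B = B*A*B" using b2 by simp
  also have "\<dots> = B*(A*C)" using A B C AB by (metis assoc_mult_mat mult_carrier_mat)
  also have "\<dots> = (C*A)*C" using A B C BA by (metis assoc_mult_mat mult_carrier_mat)
  also have "\<dots> = C" using c2 .
  finally show ?thesis .
qed

definition pen :: "real mat \<Rightarrow> real mat \<Rightarrow> bool" where
  "pen A B \<longleftrightarrow> B \<in> carrier_mat (dim_col A) (dim_row A) \<and>
      A * B * A = A \<and> B * A * B = B \<and>
      transpose_mat (A * B) = A * B \<and> transpose_mat (B * A) = B * A"

lemma pinv_right_inv:
  fixes A :: "real mat"
  assumes A: "A \<in> carrier_mat n k" and C: "C \<in> carrier_mat k n" and AC: "A * C = 1\<^sub>m n"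
  shows "pen A (mp_pinv A)" "A * mp_pinv A = 1\<^sub>m n"
proof -
  define G where "G = A * A\<^sup>T"
  have G: "G \<in> carrier_mat n n" using A unfolding G_def by auto
  have CA: "C\<^sup>T * A\<^sup>T = 1\<^sub>m n"
    using transpose_mult[OF A C] AC by simp
  have "det G \<noteq> 0"
  proof
    assume "det G = 0"
    then obtain v where v: "v \<in> carrier_vec n" "v \<noteq> 0\<^sub>v n" "G *\<^sub>v v = 0\<^sub>v n"
      using det_0_iff_vec_prod_zero[OF G] by auto
    define w where "w = A\<^sup>T *\<^sub>v v"
    have w: "w \<in> carrier_vec k" using A v unfolding w_def by auto
    have "w \<bullet> w = v \<bullet> (G *\<^sub>v v)"
    proof -
      have "G *\<^sub>v v = A *\<^sub>v w" unfolding G_def w_def using A v by auto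
      hence "v \<bullet> (G *\<^sub>v v) = v \<bullet> (A *\<^sub>v w)" by simp
      also have "\<dots> = (A\<^sup>T *\<^sub>v v) \<bullet> w"
        using A v w by (metis transpose_vec_mult_scalar transpose_transpose carrier_matD transpose_carrier_mat)
      finally show ?thesis unfolding w_def by simp
    qed
    also have "\<dots> = 0" using v by simp
    finally have "w \<bullet> w = 0" .
    hence "w = 0\<^sub>v k"
    proof -
      assume ww: "w \<bullet> w = 0"
      have "(\<Sum>i\<in>{0..<k}. (w $ i)^2) = 0" using ww w unfolding scalar_prod_def by (simp add: power2_eq_square)
      hence "\<forall>i\<in>{0..<k}. (w $ i)^2 = 0" by (subst (asm) sum_nonneg_eq_0_iff) auto
      thus ?thesis using w by (intro eq_vecI) auto
    qed
    hence "C\<^sup>T *\<^sub>v w = 0\<^sub>v n" using C by auto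
    moreover have "C\<^sup>T *\<^sub>v w = v" unfolding w_def using CA A C v
      by (metis assoc_mult_mat_vec one_mult_mat_vec transpose_carrier_mat)
    ultimately show False using v by simp
  qed
  from det_non_zero_imp_unit[OF G this, of undefined]
  obtain H where H: "H \<in> carrier_mat n n" "H * G = 1\<^sub>m n" "G * H = 1\<^sub>m n"
    unfolding Units_def ring_mat_def by auto
  have GT: "G\<^sup>T = G" unfolding G_def using A by (simp add: transpose_mult[of _ n k _ n])
  have "H\<^sup>T * G = 1\<^sub>m n" using transpose_mult[OF G H(1)] H(3) GT by simp
  hence HT: "H\<^sup>T = H"
    by (metis H(1) H(3) G assoc_mult_mat left_mult_one_mat right_mult_one_mat transpose_carrier_mat)
  define B where "B = A\<^sup>T * H"
  have B: "B \<in> carrier_mat k n" unfolding B_def using A H by auto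
  have AB: "A * B = 1\<^sub>m n" unfolding B_def G_def using A H G_def
    by (metis assoc_mult_mat transpose_carrier_mat)
  have p: "pen A B" unfolding pen_def
  proof (intro conjI)
    show "B \<in> carrier_mat (dim_col A) (dim_row A)" using A B by simp
    show "A * B * A = A" using AB A by simp
    show "B * A * B = B" using AB A B by (metis assoc_mult_mat right_mult_one_mat)
    show "(A * B)\<^sup>T = A * B" using AB by simp
    have "(B * A)\<^sup>T = A\<^sup>T * B\<^sup>T" using transpose_mult[OF B A] .
    also have "B\<^sup>T = H * A" unfolding B_def using transpose_mult[of "A\<^sup>T" k n H n] A H HT by simp
    also have "A\<^sup>T * (H * A) = B * A" unfolding B_def using A H by (metis assoc_mult_mat transpose_carrier_mat)
    finally show "(B * A)\<^sup>T = B * A" .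
  qed
  have "mp_pinv A = B" unfolding mp_pinv_def
  proof (rule the_equality)
    show "B \<in> carrier_mat (dim_col A) (dim_row A) \<and> A * B * A = A \<and> B * A * B = B \<and> (A * B)\<^sup>T = A * B \<and> (B * A)\<^sup>T = B * A"
      using p unfolding pen_def .
    fix B' assume "B' \<in> carrier_mat (dim_col A) (dim_row A) \<and> A * B' * A = A \<and> B' * A * B' = B' \<and> (A * B')\<^sup>T = A * B' \<and> (B' * A)\<^sup>T = B' * A"
    thus "B' = B" using penrose_unique[OF A _ B] p A unfolding pen_def by auto
  qed
  thus "pen A (mp_pinv A)" "A * mp_pinv A = 1\<^sub>m n" using p AB by auto
qed



lemma mult_entry:
  fixes A B :: "real mat"
  assumes "A \<in> carrier_mat n k" "B \<in> carrier_mat k p" "i < n" "j < p"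
  shows "(A * B) $$ (i,j) = (\<Sum>l<k. A $$ (i,l) * B $$ (l,j))"
  using assms by (simp add: scalar_prod_def atLeast0LessThan)

definition fip :: "real mat \<Rightarrow> real" where
  "fip A = (\<Sum>i<dim_row A. \<Sum>j<dim_col A. (A $$ (i,j))\<^sup>2)"

lemma frob_sq: "(frob_norm A)\<^sup>2 = fip A"
  unfolding frob_norm_def fip_def by (simp add: sum_nonneg)

lemma pick_range: "r < n \<Longrightarrow> pick {0..<n} r = r"
proof (induction r)
  case 0 thus ?case by (simp add: Least_equality)
next
  case (Suc r)
  hence "pick {0..<n} r = r" by simp
  thus ?case using Suc.prems by (simp, intro Least_equality, auto)
qed

lemma pick_skip:
  assumes "i < m" shows "k < m - 1 \<Longrightarrow> pick ({0..<m} - {i}) k = (if k < i then k else Suc k)"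
proof (induction k)
  case 0 thus ?case using assms
    by (cases "i = 0") (simp_all, (intro Least_equality; auto))
next
  case (Suc k)
  hence IH: "pick ({0..<m} - {i}) k = (if k < i then k else Suc k)" by simp
  have ps: "pick ({0..<m} - {i}) (Suc k) = (LEAST a. a \<in> {0..<m} - {i} \<and> (if k < i then k else Suc k) < a)"
    using IH by simp
  show ?case
  proof (cases "Suc k < i")
    case True thus ?thesis unfolding ps using Suc.prems assms by (intro Least_equality) auto
  next
    case F: False
    show ?thesis
    proof (cases "k < i")
      case True with F have "i = Suc k" by simp
      thus ?thesis unfolding ps using Suc.prems assms by (intro Least_equality) auto
    next
      case False
      thus ?thesis unfolding ps using F Suc.prems assms by (intro Least_equality) auto
    qed
  qed
qed

lemma sum_skip:
  fixes f :: "nat \<Rightarrow> real"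
  assumes "i < m"
  shows "(\<Sum>k<m-1. f (if k < i then k else Suc k)) = (\<Sum>l<m. f l) - f i"
proof -
  let ?p = "\<lambda>k. if k < i then k else Suc k"
  have inj: "inj_on ?p {..<m-1}" by (auto simp: inj_on_def split: if_splits)
  have img: "?p ` {..<m-1} = {..<m} - {i}"
  proof
    show "?p ` {..<m-1} \<subseteq> {..<m} - {i}" by auto
    show "{..<m} - {i} \<subseteq> ?p ` {..<m-1}"
    proof
      fix l assume l: "l \<in> {..<m} - {i}"
      show "l \<in> ?p ` {..<m-1}"
      proof (cases "l < i")
        case True thus ?thesis using l assms by (intro image_eqI[of _ _ l]) auto
      next
        case False thus ?thesis using l assms by (intro image_eqI[of _ _ "l - 1"]) auto
      qed
    qed
  qed
  have "(\<Sum>k<m-1. f (?p k)) = (\<Sum>l\<in>{..<m} - {i}. f l)"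
    using sum.reindex[OF inj, of f] img by simp
  also have "\<dots> = (\<Sum>l<m. f l) - f i" using assms by (simp add: sum_diff1)
  finally show ?thesis .
qed

lemma submatrix_skip_cards:
  fixes X :: "real mat"
  assumes X: "X \<in> carrier_mat n m" and i: "i < m"
  shows "card {a. a < dim_row X \<and> a \<in> {0..<n}} = n"
    and "card {a. a < dim_col X \<and> a \<in> {0..<m} - {i}} = m - 1"
proof -
  show "card {a. a < dim_row X \<and> a \<in> {0..<n}} = n" using X by simp
  have "{a. a < dim_col X \<and> a \<in> {0..<m} - {i}} = {0..<m} - {i}" using X by auto
  thus "card {a. a < dim_col X \<and> a \<in> {0..<m} - {i}} = m - 1" using i by simp
qed

lemma submatrix_skip_carrier:
  fixes X :: "real mat"
  assumes X: "X \<in> carrier_mat n m" and i: "i < m"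
  shows "submatrix X {0..<n} ({0..<m} - {i}) \<in> carrier_mat n (m - 1)"
proof (rule carrier_matI)
  show "dim_row (submatrix X {0..<n} ({0..<m} - {i})) = n" unfolding dim_submatrix by (rule submatrix_skip_cards(1)[OF X i])
  show "dim_col (submatrix X {0..<n} ({0..<m} - {i})) = m - 1" unfolding dim_submatrix by (rule submatrix_skip_cards(2)[OF X i])
qed

lemma submatrix_skip_entry:
  fixes X :: "real mat"
  assumes X: "X \<in> carrier_mat n m" and i: "i < m" and r: "r < n" and k: "k < m - 1"
  shows "submatrix X {0..<n} ({0..<m} - {i}) $$ (r,k) = X $$ (r, if k < i then k else Suc k)"
proof -
  have "submatrix X {0..<n} ({0..<m} - {i}) $$ (r,k) = X $$ (pick {0..<n} r, pick ({0..<m} - {i}) k)"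
    by (rule submatrix_index) (use submatrix_skip_cards[OF X i] r k in auto)
  also have "pick {0..<n} r = r" by (rule pick_range[OF r])
  also have "pick ({0..<m} - {i}) k = (if k < i then k else Suc k)" by (rule pick_skip[OF i k])
  finally show ?thesis .
qed



lemma min_norm:
  fixes A P D :: "real mat"
  assumes A: "A \<in> carrier_mat n k" and p: "pen A P" and AP: "A * P = 1\<^sub>m n"
    and D: "D \<in> carrier_mat k n" and AD: "A * D = 1\<^sub>m n"
  shows "fip P \<le> fip D"
proof -
  have P: "P \<in> carrier_mat k n" using p A unfolding pen_def by auto
  have pa: "P * A * P = P" "(P*A)\<^sup>T = P*A" using p unfolding pen_def by auto
  define M where "M = P\<^sup>T * P"
  have M: "M \<in> carrier_mat n n" using P unfolding M_def by auto
  have PAM: "P = A\<^sup>T * M"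
  proof -
    have "P = (P*A)\<^sup>T * P" using pa by simp
    also have "(P*A)\<^sup>T = A\<^sup>T * P\<^sup>T" using transpose_mult[OF P A] .
    also have "A\<^sup>T * P\<^sup>T * P = A\<^sup>T * M" unfolding M_def using A P
      by (metis assoc_mult_mat transpose_carrier_mat)
    finally show ?thesis .
  qed
  have Pe: "P $$ (i,j) = (\<Sum>r<n. A $$ (r,i) * M $$ (r,j))" if "i<k" "j<n" for i j
  proof -
    have "P $$ (i,j) = (A\<^sup>T * M) $$ (i,j)" using PAM by simp
    also have "\<dots> = (\<Sum>r<n. A\<^sup>T $$ (i,r) * M $$ (r,j))"
      by (rule mult_entry) (use A M that in auto)
    finally show ?thesis using A that by simp
  qed
  have Ae: "(\<Sum>i<k. A$$(r,i) * (D$$(i,j) - P$$(i,j))) = 0" if "r<n" "j<n" for r j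
  proof -
    have "(\<Sum>i<k. A$$(r,i) * D$$(i,j)) = (A*D)$$(r,j)" using mult_entry[OF A D that] by simp
    moreover have "(\<Sum>i<k. A$$(r,i) * P$$(i,j)) = (A*P)$$(r,j)" using mult_entry[OF A P that] by simp
    ultimately show ?thesis using AD AP that by (simp add: right_diff_distrib sum_subtractf)
  qed
  have cross: "(\<Sum>i<k. \<Sum>j<n. P$$(i,j) * (D$$(i,j) - P$$(i,j))) = 0"
  proof -
    have "(\<Sum>i<k. \<Sum>j<n. P$$(i,j) * (D$$(i,j) - P$$(i,j)))
        = (\<Sum>i<k. \<Sum>j<n. \<Sum>r<n. A$$(r,i) * M$$(r,j) * (D$$(i,j) - P$$(i,j)))"
      by (intro sum.cong refl) (simp add: Pe sum_distrib_right)
    also have "\<dots> = (\<Sum>j<n. \<Sum>i<k. \<Sum>r<n. A$$(r,i) * M$$(r,j) * (D$$(i,j) - P$$(i,j)))"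
      by (rule sum.swap)
    also have "\<dots> = (\<Sum>j<n. \<Sum>r<n. \<Sum>i<k. A$$(r,i) * M$$(r,j) * (D$$(i,j) - P$$(i,j)))"
      by (intro sum.cong refl sum.swap)
    also have "\<dots> = (\<Sum>j<n. \<Sum>r<n. M$$(r,j) * (\<Sum>i<k. A$$(r,i) * (D$$(i,j) - P$$(i,j))))"
      by (intro sum.cong refl) (simp add: sum_distrib_left mult_ac)
    also have "\<dots> = 0" using Ae by simp
    finally show ?thesis .
  qed
  have "fip P = (\<Sum>i<k. \<Sum>j<n. (P$$(i,j))\<^sup>2)" unfolding fip_def using P by simp
  also have "\<dots> = (\<Sum>i<k. \<Sum>j<n. (P$$(i,j))\<^sup>2) + 2 * (\<Sum>i<k. \<Sum>j<n. P$$(i,j) * (D$$(i,j) - P$$(i,j)))"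
    using cross by simp
  also have "\<dots> = (\<Sum>i<k. \<Sum>j<n. (P$$(i,j))\<^sup>2 + 2 * (P$$(i,j) * (D$$(i,j) - P$$(i,j))))"
    by (simp add: sum.distrib sum_distrib_left)
  also have "\<dots> \<le> (\<Sum>i<k. \<Sum>j<n. (P$$(i,j))\<^sup>2 + 2 * (P$$(i,j) * (D$$(i,j) - P$$(i,j))) + (D$$(i,j) - P$$(i,j))\<^sup>2)"
    by (intro sum_mono) simp
  also have "\<dots> = (\<Sum>i<k. \<Sum>j<n. (D$$(i,j))\<^sup>2)"
    by (intro sum.cong refl) (simp add: power2_eq_square algebra_simps)
  also have "\<dots> = fip D" unfolding fip_def using D by simp
  finally show ?thesis .
qed

lemma sum_delta_mult:
  fixes f :: "nat \<Rightarrow> real" assumes "i < m"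
  shows "(\<Sum>k<m. f k * (if k = i then 1 else 0)) = f i"
proof -
  have "(\<Sum>k<m. f k * (if k = i then 1 else 0)) = (\<Sum>k<m. if k = i then f k else 0)"
    by (intro sum.cong) auto
  thus ?thesis using assms by simp
qed

lemma remove_col:
  fixes X B :: "real mat" and q :: "nat \<Rightarrow> nat \<Rightarrow> real"
  assumes X: "X \<in> carrier_mat n m" and B: "B \<in> carrier_mat m n" and i: "i < m"
   and XB: "\<And>r j. r<n \<Longrightarrow> j<n \<Longrightarrow> (\<Sum>k<m. X$$(r,k) * B$$(k,j)) = (if r = j then 1 else 0)"
   and E3: "\<And>j. j<n \<Longrightarrow> (\<Sum>k<m. B$$(k,j) * q k i) = B$$(i,j)"
   and E4: "\<And>r. r<n \<Longrightarrow> (\<Sum>k<m. X$$(r,k) * q k i) = X$$(r,i)"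
   and Eqq: "(\<Sum>k<m. (q k i)\<^sup>2) = q i i"
   and vpos: "q i i < 1"
  shows "\<exists>D \<in> carrier_mat (m-1) n. submatrix X {0..<n} ({0..<m}-{i}) * D = 1\<^sub>m n \<and>
           fip D = fip B + (\<Sum>j<n. (B$$(i,j))\<^sup>2) / (1 - q i i)"
proof -
  define vv where "vv = 1 - q i i"
  have vv: "vv > 0" using vpos unfolding vv_def by simp
  define w where "w k = (if k = i then 1 else 0) - q k i" for k
  define D' where "D' k j = B$$(k,j) - w k * (B$$(i,j) / vv)" for k j
  have wi: "w i = vv" unfolding w_def vv_def by simp
  have D'i: "D' i j = 0" for j unfolding D'_def wi using vv by simp
  have Xw: "(\<Sum>k<m. X$$(r,k) * w k) = 0" if "r<n" for r
  proof -
    have "(\<Sum>k<m. X$$(r,k) * w k) = (\<Sum>k<m. X$$(r,k) * (if k = i then 1 else 0)) - (\<Sum>k<m. X$$(r,k) * q k i)"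
      unfolding w_def by (simp add: right_diff_distrib sum_subtractf)
    also have "\<dots> = X$$(r,i) - X$$(r,i)" using sum_delta_mult[OF i, of "\<lambda>k. X$$(r,k)"] E4[OF that] by simp
    finally show ?thesis by simp
  qed
  have Bw: "(\<Sum>k<m. B$$(k,j) * w k) = 0" if "j<n" for j
  proof -
    have "(\<Sum>k<m. B$$(k,j) * w k) = (\<Sum>k<m. B$$(k,j) * (if k = i then 1 else 0)) - (\<Sum>k<m. B$$(k,j) * q k i)"
      unfolding w_def by (simp add: right_diff_distrib sum_subtractf)
    also have "\<dots> = B$$(i,j) - B$$(i,j)" using sum_delta_mult[OF i, of "\<lambda>k. B$$(k,j)"] E3[OF that] by simp
    finally show ?thesis by simp
  qed
  have XD': "(\<Sum>k<m. X$$(r,k) * D' k j) = (if r = j then 1 else 0)" if "r<n" "j<n" for r j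
  proof -
    have "(\<Sum>k<m. X$$(r,k) * D' k j) = (\<Sum>k<m. X$$(r,k) * B$$(k,j)) - (\<Sum>k<m. X$$(r,k) * w k) * (B$$(i,j)/vv)"
      unfolding D'_def by (simp add: right_diff_distrib sum_subtractf sum_distrib_right mult.assoc sum_divide_distrib)
    thus ?thesis using XB[OF that] Xw[OF that(1)] by simp
  qed
  have ww: "(\<Sum>k<m. (w k)\<^sup>2) = vv"
  proof -
    have "(\<Sum>k<m. (w k)\<^sup>2) = (\<Sum>k<m. (if k = i then 1 - 2 * q k i else 0) + (q k i)\<^sup>2)"
      unfolding w_def by (intro sum.cong refl) (simp add: power2_eq_square algebra_simps)
    also have "\<dots> = (1 - 2 * q i i) + q i i" using i Eqq by (simp add: sum.distrib)
    finally show ?thesis unfolding vv_def by simp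
  qed
  have fB: "fip B = (\<Sum>k<m. \<Sum>j<n. (B$$(k,j))\<^sup>2)" unfolding fip_def using B by simp
  have S2: "(\<Sum>k<m. \<Sum>j<n. 2 * (B$$(i,j)/vv) * (B$$(k,j) * w k)) = 0"
  proof -
    have "(\<Sum>k<m. \<Sum>j<n. 2 * (B$$(i,j)/vv) * (B$$(k,j) * w k))
        = (\<Sum>j<n. \<Sum>k<m. 2 * (B$$(i,j)/vv) * (B$$(k,j) * w k))" by (rule sum.swap)
    also have "\<dots> = (\<Sum>j<n. 2 * (B$$(i,j)/vv) * (\<Sum>k<m. B$$(k,j) * w k))"
      by (simp add: sum_distrib_left)
    also have "\<dots> = 0" using Bw by simp
    finally show ?thesis .
  qed
  have S3: "(\<Sum>k<m. \<Sum>j<n. (B$$(i,j)/vv)\<^sup>2 * (w k)\<^sup>2) = (\<Sum>j<n. (B$$(i,j))\<^sup>2) / vv"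
  proof -
    have "(\<Sum>k<m. \<Sum>j<n. (B$$(i,j)/vv)\<^sup>2 * (w k)\<^sup>2) = (\<Sum>j<n. \<Sum>k<m. (B$$(i,j)/vv)\<^sup>2 * (w k)\<^sup>2)"
      by (rule sum.swap)
    also have "\<dots> = (\<Sum>j<n. (B$$(i,j)/vv)\<^sup>2 * vv)" by (simp add: sum_distrib_left[symmetric] ww)
    also have "\<dots> = (\<Sum>j<n. (B$$(i,j))\<^sup>2 / vv)"
      using vv by (intro sum.cong refl) (simp add: power2_eq_square field_simps)
    also have "\<dots> = (\<Sum>j<n. (B$$(i,j))\<^sup>2) / vv" by (simp add: sum_divide_distrib)
    finally show ?thesis .
  qed
  have fD': "(\<Sum>k<m. \<Sum>j<n. (D' k j)\<^sup>2) = fip B + (\<Sum>j<n. (B$$(i,j))\<^sup>2) / vv"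
  proof -
    have "(\<Sum>k<m. \<Sum>j<n. (D' k j)\<^sup>2) = (\<Sum>k<m. \<Sum>j<n. (B$$(k,j))\<^sup>2 - 2 * (B$$(i,j)/vv) * (B$$(k,j) * w k) + (B$$(i,j)/vv)\<^sup>2 * (w k)\<^sup>2)"
      unfolding D'_def by (intro sum.cong refl) (simp add: power2_eq_square algebra_simps)
    also have "\<dots> = (\<Sum>k<m. \<Sum>j<n. (B$$(k,j))\<^sup>2) - (\<Sum>k<m. \<Sum>j<n. 2 * (B$$(i,j)/vv) * (B$$(k,j) * w k)) + (\<Sum>k<m. \<Sum>j<n. (B$$(i,j)/vv)\<^sup>2 * (w k)\<^sup>2)"
      by (simp only: sum.distrib sum_subtractf)
    also have "\<dots> = fip B + (\<Sum>j<n. (B$$(i,j))\<^sup>2) / vv" using S2 S3 fB by simp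
    finally show ?thesis .
  qed
  let ?p = "\<lambda>k. if k < i then k else Suc k"
  define D where "D = mat (m-1) n (\<lambda>(k,j). D' (?p k) j)"
  have D: "D \<in> carrier_mat (m-1) n" unfolding D_def by simp
  let ?XS = "submatrix X {0..<n} ({0..<m}-{i})"
  have XS: "?XS \<in> carrier_mat n (m-1)" by (rule submatrix_skip_carrier[OF X i])
  have XSD: "?XS * D = 1\<^sub>m n"
  proof (rule eq_matI)
    show "dim_row (?XS * D) = dim_row (1\<^sub>m n)" "dim_col (?XS * D) = dim_col (1\<^sub>m n)" using XS D by auto
    fix r j assume r: "r < dim_row (1\<^sub>m n)" and j: "j < dim_col (1\<^sub>m n)"
    hence r: "r < n" and j: "j < n" by auto
    have "(?XS * D) $$ (r,j) = (\<Sum>k<m-1. ?XS $$ (r,k) * D $$ (k,j))" by (rule mult_entry[OF XS D r j])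
    also have "\<dots> = (\<Sum>k<m-1. (\<lambda>l. X$$(r,l) * D' l j) (?p k))"
      by (intro sum.cong refl) (simp add: submatrix_skip_entry[OF X i r] D_def j)
    also have "\<dots> = (\<Sum>l<m. X$$(r,l) * D' l j) - X$$(r,i) * D' i j" by (rule sum_skip[OF i])
    also have "\<dots> = 1\<^sub>m n $$ (r,j)" using XD'[OF r j] D'i r j by simp
    finally show "(?XS * D) $$ (r,j) = 1\<^sub>m n $$ (r,j)" .
  qed
  have "fip D = (\<Sum>k<m-1. \<Sum>j<n. (D$$(k,j))\<^sup>2)" unfolding fip_def using D by simp
  also have "\<dots> = (\<Sum>k<m-1. (\<lambda>l. \<Sum>j<n. (D' l j)\<^sup>2) (?p k))"
    by (intro sum.cong refl) (simp add: D_def)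
  also have "\<dots> = (\<Sum>l<m. \<Sum>j<n. (D' l j)\<^sup>2) - (\<Sum>j<n. (D' i j)\<^sup>2)" by (rule sum_skip[OF i])
  also have "\<dots> = fip B + (\<Sum>j<n. (B$$(i,j))\<^sup>2) / vv" using fD' D'i by simp
  finally have "fip D = fip B + (\<Sum>j<n. (B$$(i,j))\<^sup>2) / (1 - q i i)" unfolding vv_def .
  thus ?thesis using D XSD by blast
qed



theorem lemma3p2:
  fixes X :: "real mat" and n m :: nat
  assumes "X \<in> carrier_mat n m"
    and "m > n"
    and "vec_space.rank n X = min n m"
  shows "\<exists>S. S \<subseteq> {0..<m} \<and> card S = m - 1 \<and>
           vec_space.rank n (submatrix X {0..<n} S) = min n (m - 1) \<and>
           (frob_norm (mp_pinv (submatrix X {0..<n} S)))\<^sup>2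
             \<le> (real m - real n + 1) / (real m - real n) * (frob_norm (mp_pinv X))\<^sup>2"
proof -
  note X = assms(1)
  have mn: "min n m = n" "min n (m - 1) = n" using assms(2) by auto
  have rX: "vec_space.rank n X = n" using assms(3) mn by simp
  have "\<forall>j<n. \<exists>x. x \<in> carrier_vec m \<and> X *\<^sub>v x = unit_vec n j"
    using rank_full_surj[OF X rX] by (meson unit_vec_carrier)
  then obtain xs where xs: "\<And>j. j<n \<Longrightarrow> xs j \<in> carrier_vec m \<and> X *\<^sub>v xs j = unit_vec n j" by metis
  define C where "C = mat m n (\<lambda>(i,j). xs j $ i)"
  have C: "C \<in> carrier_mat m n" unfolding C_def by simp
  have XC: "X * C = 1\<^sub>m n"
  proof (rule eq_matI)
    fix r j assume "r < dim_row (1\<^sub>m n)" "j < dim_col (1\<^sub>m n)"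
    hence r: "r<n" and j: "j<n" by auto
    have dx: "dim_vec (xs j) = m" using xs[OF j] by auto
    have "(X*C)$$(r,j) = (\<Sum>l<m. X$$(r,l) * C$$(l,j))" by (rule mult_entry[OF X C r j])
    also have "(\<Sum>l<m. X$$(r,l) * C$$(l,j)) = row X r \<bullet> xs j"
      unfolding scalar_prod_def dx atLeast0LessThan using X r by (intro sum.cong) (auto simp: C_def j)
    also have "\<dots> = (X *\<^sub>v xs j) $ r" using X r by simp
    also have e: "X *\<^sub>v xs j = unit_vec n j" using xs[OF j] by simp
    also have "unit_vec n j $ r = 1\<^sub>m n $$ (r,j)" using r j by simp
    finally show "(X*C)$$(r,j) = 1\<^sub>m n $$ (r,j)" .
  qed (use X C in auto)
  define B where "B = mp_pinv X"
  have penB: "pen X B" and XB: "X * B = 1\<^sub>m n" using pinv_right_inv[OF X C XC] unfolding B_def by auto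
  have B: "B \<in> carrier_mat m n" and pB: "X*B*X = X" "B*X*B = B" "(X*B)\<^sup>T = X*B" "(B*X)\<^sup>T = B*X"
    using penB X unfolding pen_def by auto
  define Q where "Q = B * X"
  have Q: "Q \<in> carrier_mat m m" unfolding Q_def using B X by auto
  have QT: "Q\<^sup>T = Q" unfolding Q_def using pB by simp
  have QQ: "Q * Q = Q" unfolding Q_def using pB B X by (metis assoc_mult_mat mult_carrier_mat)
  have QB: "Q * B = B" unfolding Q_def using pB by simp
  have BTQ: "B\<^sup>T * Q = B\<^sup>T" using transpose_mult[OF Q B] QB QT by simp
  have XQ: "X * Q = X" unfolding Q_def using pB B X by (metis assoc_mult_mat)
  define q where "q k l = Q $$ (k,l)" for k l
  have XBe: "(\<Sum>k<m. X$$(r,k)*B$$(k,j)) = (if r=j then 1 else 0)" if "r<n" "j<n" for r j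
    using mult_entry[OF X B that] XB that by simp
  have E3: "(\<Sum>k<m. B$$(k,j) * q k i) = B$$(i,j)" if "j<n" "i<m" for i j
  proof -
    have "(B\<^sup>T * Q) $$ (j,i) = (\<Sum>k<m. B\<^sup>T$$(j,k) * Q$$(k,i))"
      by (rule mult_entry) (use B Q that in auto)
    thus ?thesis using BTQ B that unfolding q_def by simp
  qed
  have E4: "(\<Sum>k<m. X$$(r,k) * q k i) = X$$(r,i)" if "r<n" "i<m" for r i
    using mult_entry[OF X Q that] XQ unfolding q_def by simp
  have qsym: "q k l = q l k" if "k<m" "l<m" for k l
  proof -
    have "Q\<^sup>T $$ (k,l) = Q $$ (l,k)" using Q that by simp
    thus ?thesis using QT unfolding q_def by simp
  qed
  have Eqq: "(\<Sum>k<m. (q k i)\<^sup>2) = q i i" if "i<m" for i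
  proof -
    have "(Q * Q) $$ (i,i) = (\<Sum>k<m. Q$$(i,k) * Q$$(k,i))" by (rule mult_entry[OF Q Q that that])
    also have "\<dots> = (\<Sum>k<m. (q k i)\<^sup>2)"
      using qsym that unfolding q_def by (intro sum.cong refl) (simp add: power2_eq_square)
    finally show ?thesis using QQ unfolding q_def by simp
  qed
  have trace: "(\<Sum>i<m. q i i) = real n"
  proof -
    have "(\<Sum>i<m. q i i) = (\<Sum>i<m. \<Sum>l<n. B$$(i,l) * X$$(l,i))"
      unfolding q_def Q_def by (intro sum.cong refl) (rule mult_entry[OF B X], auto)
    also have "\<dots> = (\<Sum>l<n. \<Sum>i<m. X$$(l,i) * B$$(i,l))" by (subst sum.swap) (simp add: mult.commute)
    also have "\<dots> = (\<Sum>l<n. 1)" using XBe by simp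
    finally show ?thesis by simp
  qed
  have q_le1: "q i i \<le> 1" if "i<m" for i
  proof -
    have "(q i i)\<^sup>2 \<le> (\<Sum>k<m. (q k i)\<^sup>2)" by (rule member_le_sum) (use that in auto)
    hence h: "(q i i)\<^sup>2 \<le> q i i" using Eqq[OF that] by simp
    show ?thesis
    proof (rule ccontr)
      assume "\<not> q i i \<le> 1"
      hence "q i i * 1 < q i i * q i i" by (intro mult_strict_left_mono) auto
      thus False using h by (simp add: power2_eq_square)
    qed
  qed
  define \<beta> where "\<beta> l = (\<Sum>j<n. (B$$(l,j))\<^sup>2)" for l
  define T where "T = fip B"
  have T: "T = (\<Sum>l<m. \<beta> l)" unfolding T_def fip_def \<beta>_def using B by simp
  have \<beta>0: "\<beta> l \<ge> 0" for l unfolding \<beta>_def by (simp add: sum_nonneg)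
  have mn0: "real m - real n > 0" using assms(2) by simp
  have "\<exists>i<m. q i i < 1 \<and> \<beta> i * (real m - real n) \<le> (1 - q i i) * T"
  proof (rule ccontr)
    assume "\<not> ?thesis"
    hence h: "\<And>i. i<m \<Longrightarrow> q i i < 1 \<Longrightarrow> (1 - q i i) * T < \<beta> i * (real m - real n)" by force
    have le: "(1 - q i i) * T \<le> \<beta> i * (real m - real n)" if "i<m" for i
    proof (cases "q i i < 1")
      case True thus ?thesis using h[OF that] by simp
    next
      case False
      hence "q i i = 1" using q_le1[OF that] by simp
      thus ?thesis using \<beta>0[of i] mn0 by simp
    qed
    have ex: "\<exists>i\<in>{..<m}. (1 - q i i) * T < \<beta> i * (real m - real n)"
    proof (rule ccontr)
      assume "\<not> ?thesis"
      hence "\<forall>i<m. \<not> q i i < 1" using h by auto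
      hence "\<forall>i<m. q i i = 1" using q_le1 by force
      hence "(\<Sum>i<m. q i i) = real m" by simp
      thus False using trace assms(2) by simp
    qed
    have "(\<Sum>i<m. (1 - q i i) * T) < (\<Sum>i<m. \<beta> i * (real m - real n))"
      by (rule sum_strict_mono_ex1) (use le ex in auto)
    also have "\<dots> = T * (real m - real n)" using T by (simp add: sum_distrib_right)
    also have "(\<Sum>i<m. (1 - q i i) * T) = (real m - real n) * T"
      using trace by (simp add: sum_distrib_right[symmetric] sum_subtractf)
    finally show False by simp
  qed
  then obtain i where i: "i<m" "q i i < 1" and bi: "\<beta> i * (real m - real n) \<le> (1 - q i i) * T" by blast
  obtain D where D: "D \<in> carrier_mat (m-1) n" and XSD: "submatrix X {0..<n} ({0..<m}-{i}) * D = 1\<^sub>m n"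
    and fD: "fip D = fip B + (\<Sum>j<n. (B$$(i,j))\<^sup>2) / (1 - q i i)"
  proof -
    have E3i: "\<And>j. j<n \<Longrightarrow> (\<Sum>k<m. B$$(k,j) * q k i) = B$$(i,j)" using E3 i(1) by blast
    have E4i: "\<And>r. r<n \<Longrightarrow> (\<Sum>k<m. X$$(r,k) * q k i) = X$$(r,i)" using E4 i(1) by blast
    show ?thesis using remove_col[where q=q, OF X B i(1) XBe E3i E4i Eqq[OF i(1)] i(2)] that by blast
  qed
  let ?XS = "submatrix X {0..<n} ({0..<m}-{i})"
  have XS: "?XS \<in> carrier_mat n (m-1)" by (rule submatrix_skip_carrier[OF X i(1)])
  have rS: "vec_space.rank n ?XS = min n (m - 1)" using right_inv_rank[OF XS D XSD] mn by simp
  have pS: "pen ?XS (mp_pinv ?XS)" "?XS * mp_pinv ?XS = 1\<^sub>m n" using pinv_right_inv[OF XS D XSD] by auto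
  have mnS: "fip (mp_pinv ?XS) \<le> fip D" by (rule min_norm[OF XS pS D XSD])
  have v: "1 - q i i > 0" using i by simp
  have "\<beta> i / (1 - q i i) \<le> T / (real m - real n)"
    using bi v mn0 by (simp add: divide_le_eq le_divide_eq field_simps)
  hence "fip (mp_pinv ?XS) \<le> T + T / (real m - real n)"
    using mnS fD unfolding T_def \<beta>_def by simp
  also have "\<dots> = (real m - real n + 1) / (real m - real n) * T"
    using mn0 by (simp add: field_simps)
  finally have fin: "(frob_norm (mp_pinv ?XS))\<^sup>2 \<le> (real m - real n + 1) / (real m - real n) * (frob_norm (mp_pinv X))\<^sup>2"
    unfolding frob_sq T_def B_def .
  have "{0..<m} - {i} \<subseteq> {0..<m}" "card ({0..<m} - {i}) = m - 1" using i by auto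
  thus ?thesis using rS fin by blast
qed


end
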